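(* Let $G$ be a finite, simple, connected graph with $\dim_{wt}(G)=2$ and let $\{u,v\}$ be a weak total metric basis of $G$. Then $u$ and $v$ each have degree at most two.
   Context: $d(x,y)$ is the shortest-path distance. A set $W\subseteq V(G)$ is a resolving set if for every two distinct vertices $y,z$ there is $x\in W$ with $d(y,x)\ne d(z,x)$. A set $W$ is a weak total resolving set (WTR-set) if $W$ is resolving and, for every $w\in W$ and every $x\in V(G)\setminus W$, there is $w'\in W\setminus\{w\}$ with $d(x,w')\ne d(w,w')$. $\dim_{wt}(G)$ is the minimum cardinality of a WTR-set, and a weak total metric basis is a WTR-set of that cardinality. *)

theory Defs
  imports Main
begin

definition simple_graph :: "'a set \<Rightarrow> ('a \<Rightarrow> 'a \<Rightarrow> bool) \<Rightarrow> bool" where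
  "simple_graph V E \<longleftrightarrow> finite V \<and> (\<forall>x y. E x y \<longrightarrow> x \<in> V \<and> y \<in> V)
     \<and> (\<forall>x y. E x y \<longrightarrow> E y x) \<and> (\<forall>x. \<not> E x x)"

definition connected_graph :: "'a set \<Rightarrow> ('a \<Rightarrow> 'a \<Rightarrow> bool) \<Rightarrow> bool" where
  "connected_graph V E \<longleftrightarrow> V \<noteq> {} \<and> (\<forall>x\<in>V. \<forall>y\<in>V. \<exists>n. (E ^^ n) x y)"

definition gdist :: "('a \<Rightarrow> 'a \<Rightarrow> bool) \<Rightarrow> 'a \<Rightarrow> 'a \<Rightarrow> nat" where
  "gdist E x y = (LEAST n. (E ^^ n) x y)"

definition degree :: "('a \<Rightarrow> 'a \<Rightarrow> bool) \<Rightarrow> 'a \<Rightarrow> nat" where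
  "degree E x = card {y. E x y}"

definition resolving_set :: "'a set \<Rightarrow> ('a \<Rightarrow> 'a \<Rightarrow> bool) \<Rightarrow> 'a set \<Rightarrow> bool" where
  "resolving_set V E W \<longleftrightarrow> W \<subseteq> V \<and>
     (\<forall>y\<in>V. \<forall>z\<in>V. y \<noteq> z \<longrightarrow> (\<exists>x\<in>W. gdist E y x \<noteq> gdist E z x))"

definition wtr_set :: "'a set \<Rightarrow> ('a \<Rightarrow> 'a \<Rightarrow> bool) \<Rightarrow> 'a set \<Rightarrow> bool" where
  "wtr_set V E W \<longleftrightarrow> resolving_set V E W \<and>
     (\<forall>w\<in>W. \<forall>x\<in>V - W. \<exists>w'\<in>W - {w}. gdist E x w' \<noteq> gdist E w w')"

text \<open>Minimum cardinality of a WTR-set (0 by convention if none exists).\<close>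
definition dim_wt :: "'a set \<Rightarrow> ('a \<Rightarrow> 'a \<Rightarrow> bool) \<Rightarrow> nat" where
  "dim_wt V E = Inf (card ` {W. wtr_set V E W})"

definition wt_metric_basis :: "'a set \<Rightarrow> ('a \<Rightarrow> 'a \<Rightarrow> bool) \<Rightarrow> 'a set \<Rightarrow> bool" where
  "wt_metric_basis V E W \<longleftrightarrow> wtr_set V E W \<and> card W = dim_wt V E"

end

theory Submission
  imports Defs
begin

lemma walk_sym:
  assumes "\<forall>x y. E x y \<longrightarrow> E y x"
  shows "(E ^^ n) x y \<Longrightarrow> (E ^^ n) y x"
proof (induction n arbitrary: x y)
  case 0 then show ?case by simp
next
  case (Suc n)
  then obtain z where "(E ^^ n) x z" "E z y" by auto
  then show ?case using Suc.IH assms by (meson relpowp_Suc_I2)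
qed

lemma gdist_le: "(E ^^ n) x y \<Longrightarrow> gdist E x y \<le> n"
  unfolding gdist_def by (rule Least_le)

lemma gdist_walk: "(E ^^ n) x y \<Longrightarrow> (E ^^ gdist E x y) x y"
  unfolding gdist_def by (rule LeastI)

lemma main:
  assumes sg: "simple_graph V E" and cg: "connected_graph V E"
    and wt: "wtr_set V E {u, v}" and uv: "u \<noteq> v"
  shows "degree E u \<le> 2"
proof -
  have sym: "\<forall>x y. E x y \<longrightarrow> E y x" and irr: "\<forall>x. \<not> E x x"
    and inV: "\<forall>x y. E x y \<longrightarrow> x \<in> V \<and> y \<in> V" and fin: "finite V"
    using sg unfolding simple_graph_def by auto
  have res: "resolving_set V E {u,v}" using wt unfolding wtr_set_def by auto
  have uV: "u \<in> V" and vV: "v \<in> V" using res unfolding resolving_set_def by auto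
  define D where "D = gdist E u v"
  define N where "N = {y. E u y}"
  have NV: "N \<subseteq> V" using inV N_def by auto
  have d1: "gdist E y u = 1" if "y \<in> N" for y
  proof -
    have e: "E y u" using that sym N_def by auto
    have "(E ^^ 1) y u" using e by auto
    hence le: "gdist E y u \<le> 1" by (rule gdist_le)
    have "gdist E y u \<noteq> 0"
    proof
      assume "gdist E y u = 0"
      with gdist_walk[OF \<open>(E ^^ 1) y u\<close>] have "y = u" by simp
      with e irr show False by auto
    qed
    with le show ?thesis by simp
  qed
  have walk: "\<exists>n. (E ^^ n) x y" if "x \<in> V" "y \<in> V" for x y
    using cg that unfolding connected_graph_def by auto
  have near: "gdist E y v \<in> {D - 1, D + 1}" if "y \<in> N" for y
  proof -
    have e: "E u y" using that N_def by auto
    have yV: "y \<in> V" using e inV by auto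
    obtain n where "(E ^^ n) y v" using walk yV vV by blast
    hence wy: "(E ^^ gdist E y v) y v" by (rule gdist_walk)
    obtain m where "(E ^^ m) u v" using walk uV vV by blast
    hence wu: "(E ^^ D) u v" unfolding D_def by (rule gdist_walk)
    have "(E ^^ Suc (gdist E y v)) u v" using e wy by (meson relpowp_Suc_I2)
    hence a: "D \<le> Suc (gdist E y v)" unfolding D_def by (rule gdist_le)
    have "(E ^^ Suc D) y v" using sym e wu by (meson relpowp_Suc_I2)
    hence b: "gdist E y v \<le> Suc D" by (rule gdist_le)
    have D0: "D \<noteq> 0"
    proof
      assume "D = 0" with wu have "u = v" by simp
      with uv show False by simp
    qed
    have c: "gdist E y v \<noteq> D"
    proof (cases "y = v")
      case True then show ?thesis using D0 by (simp add: gdist_def)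
    next
      case False
      have "y \<noteq> u" using e irr by auto
      with False yV have "y \<in> V - {u,v}" by auto
      with wt obtain w' where "w' \<in> {u,v} - {u}" "gdist E y w' \<noteq> gdist E u w'"
        unfolding wtr_set_def by blast
      then show ?thesis using uv D_def by auto
    qed
    from a b c D0 show ?thesis by auto
  qed
  have inj: "inj_on (\<lambda>y. gdist E y v) N"
  proof (rule inj_onI)
    fix y z assume y: "y \<in> N" and z: "z \<in> N" and eq: "gdist E y v = gdist E z v"
    show "y = z"
    proof (rule ccontr)
      assume "y \<noteq> z"
      with res y z NV obtain x where "x \<in> {u,v}" "gdist E y x \<noteq> gdist E z x"
        unfolding resolving_set_def by blast
      with d1[OF y] d1[OF z] eq show False by auto
    qed
  qed
  have "card N = card ((\<lambda>y. gdist E y v) ` N)" using inj by (simp add: card_image)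
  also have "\<dots> \<le> card {D - 1, D + 1}"
    using near by (intro card_mono) auto
  also have "\<dots> \<le> 2" by (simp add: card_insert_if)
  finally show ?thesis unfolding degree_def N_def .
qed

theorem theorem1:
  fixes V :: "'a set" and E :: "'a \<Rightarrow> 'a \<Rightarrow> bool" and u v :: 'a
  assumes "simple_graph V E" and "connected_graph V E"
    and "dim_wt V E = 2"
    and "wt_metric_basis V E {u, v}"
  shows "degree E u \<le> 2 \<and> degree E v \<le> 2"
proof -
  have w: "wtr_set V E {u,v}" and c: "card {u,v} = 2"
    using assms unfolding wt_metric_basis_def by auto
  have uv: "u \<noteq> v" using c by (auto simp: card_insert_if split: if_splits)
  have w2: "wtr_set V E {v,u}" using w by (simp add: insert_commute)
  show ?thesis using main[OF assms(1,2) w uv] main[OF assms(1,2) w2] uv by auto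
qed

end
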